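(* Let $n\ge 4$ be an integer with $n=p^m$ for some prime $p$ and integer $m\ge 1$. Then the line graph $L(B(n,1))$ is a Cayley graph.
   Context: For $n\ge 4$, $B(n,1)$ is the graph whose vertices are the subsets of $[n]=\{1,\dots,n\}$ of size $1$ or $2$, with $v\sim w$ iff $v\subset w$ or $w\subset v$. The line graph $L(\Gamma)$ has the edges of $\Gamma$ as vertices, two being adjacent iff the edges share an endpoint. A graph is a Cayley graph if it is isomorphic to some $\mathrm{Cay}(G;\Omega)$ (vertex set a group $G$, $\Omega=\Omega^{-1}\not\ni 1$, $g\sim h$ iff $g^{-1}h\in\Omega$). *)

theory Defs
  imports "HOL-Algebra.Group" "HOL-Computational_Algebra.Primes"
begin

text \<open>Simple graphs are given by a vertex set V and an adjacency relation E
  (only its restriction to V matters).\<close>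

definition B_verts :: "nat \<Rightarrow> nat set set" where
  "B_verts n = {A. A \<subseteq> {1..n} \<and> (card A = 1 \<or> card A = 2)}"

definition B_adj :: "nat set \<Rightarrow> nat set \<Rightarrow> bool" where
  "B_adj v w \<longleftrightarrow> v \<subset> w \<or> w \<subset> v"

definition line_verts :: "'a set \<Rightarrow> ('a \<Rightarrow> 'a \<Rightarrow> bool) \<Rightarrow> 'a set set" where
  "line_verts V E = {{v, w} | v w. v \<in> V \<and> w \<in> V \<and> v \<noteq> w \<and> E v w}"

definition line_adj :: "'a set \<Rightarrow> 'a set \<Rightarrow> bool" where
  "line_adj e f \<longleftrightarrow> e \<noteq> f \<and> e \<inter> f \<noteq> {}"

text \<open>The group is taken with
  elements of the vertex type (no loss, since the carrier is in bijection
  with the vertex set, so any group structure can be transported).\<close>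
definition is_cayley_graph :: "'a set \<Rightarrow> ('a \<Rightarrow> 'a \<Rightarrow> bool) \<Rightarrow> bool" where
  "is_cayley_graph V E \<longleftrightarrow>
     (\<exists>(G :: 'a monoid) \<Omega> f.
        group G \<and> \<Omega> \<subseteq> carrier G \<and> \<one>\<^bsub>G\<^esub> \<notin> \<Omega> \<and>
        (\<forall>s\<in>\<Omega>. inv\<^bsub>G\<^esub> s \<in> \<Omega>) \<and>
        bij_betw f V (carrier G) \<and>
        (\<forall>x\<in>V. \<forall>y\<in>V. E x y \<longleftrightarrow> inv\<^bsub>G\<^esub> (f x) \<otimes>\<^bsub>G\<^esub> f y \<in> \<Omega>))"

end

theory Submission
  imports Defs "HOL-Algebra.Algebraic_Closure" "HOL-Number_Theory.Residues"
begin

hide_const (open) Divisibility.prime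



lemma (in cring) binomial_alg:
  assumes x: "x \<in> carrier R" and y: "y \<in> carrier R"
  shows "(x \<oplus> y) [^] n = (\<Oplus>k\<in>{..n}. [(n choose k)] \<cdot> (x [^] k \<otimes> y [^] (n - k)))"
proof (induction n)
  case 0
  then show ?case using x y by simp
next
  case (Suc n)
  define B where "B = (\<Oplus>k\<in>{..n}. [(n choose k)] \<cdot> (x [^] k \<otimes> y [^] (n - k)))"
  have Bc: "B \<in> carrier R" unfolding B_def using x y by (auto intro!: finsum_closed)
  have "(x \<oplus> y) [^] Suc n = B \<otimes> (x \<oplus> y)" using Suc B_def by simp
  also have "\<dots> = B \<otimes> x \<oplus> B \<otimes> y" using Bc x y r_distr by simp
  also have "B \<otimes> x = (\<Oplus>k\<in>{..n}. [(n choose k)] \<cdot> (x [^] Suc k \<otimes> y [^] (n - k)))"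
  proof -
    have "B \<otimes> x = (\<Oplus>k\<in>{..n}. [(n choose k)] \<cdot> (x [^] k \<otimes> y [^] (n - k)) \<otimes> x)"
      unfolding B_def using x y by (subst finsum_ldistr) auto
    also have "\<dots> = (\<Oplus>k\<in>{..n}. [(n choose k)] \<cdot> (x [^] Suc k \<otimes> y [^] (n - k)))"
      using x y by (intro finsum_cong') (auto simp: add_pow_ldistr add_pow_rdistr m_ac)
    finally show ?thesis .
  qed
  also have "B \<otimes> y = (\<Oplus>k\<in>{..n}. [(n choose Suc k)] \<cdot> (x [^] Suc k \<otimes> y [^] (n - k))) \<oplus> y [^] Suc n"
  proof -
    have "B \<otimes> y = (\<Oplus>k\<in>{..n}. [(n choose k)] \<cdot> (x [^] k \<otimes> y [^] (Suc n - k)))"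
    proof -
      have "B \<otimes> y = (\<Oplus>k\<in>{..n}. [(n choose k)] \<cdot> (x [^] k \<otimes> y [^] (n - k)) \<otimes> y)"
        unfolding B_def using x y by (subst finsum_ldistr) auto
      also have "\<dots> = (\<Oplus>k\<in>{..n}. [(n choose k)] \<cdot> (x [^] k \<otimes> y [^] (Suc n - k)))"
      proof (intro finsum_cong')
        fix k assume "k \<in> {..n}"
        then have "Suc n - k = Suc (n - k)" by auto
        then show "[(n choose k)] \<cdot> (x [^] k \<otimes> y [^] (n - k)) \<otimes> y = [(n choose k)] \<cdot> (x [^] k \<otimes> y [^] (Suc n - k))"
          using x y by (simp add: add_pow_ldistr add_pow_rdistr m_ac)
      qed (use x y in auto)
      finally show ?thesis .
    qed
    also have "\<dots> = (\<Oplus>k\<in>{..Suc n}. [(n choose k)] \<cdot> (x [^] k \<otimes> y [^] (Suc n - k)))"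
      using x y by (subst finsum_Suc) (auto simp: binomial_eq_0)
    also have "\<dots> = (\<Oplus>k\<in>{..n}. [(n choose Suc k)] \<cdot> (x [^] Suc k \<otimes> y [^] (n - k))) \<oplus> y [^] Suc n"
      using x y by (subst finsum_Suc2) auto
    finally show ?thesis .
  qed
  also have "(\<Oplus>k\<in>{..Suc n}. [(Suc n choose k)] \<cdot> (x [^] k \<otimes> y [^] (Suc n - k)))
     = ((\<Oplus>k\<in>{..n}. [(n choose k)] \<cdot> (x [^] Suc k \<otimes> y [^] (n - k)))
       \<oplus> (\<Oplus>k\<in>{..n}. [(n choose Suc k)] \<cdot> (x [^] Suc k \<otimes> y [^] (n - k)))) \<oplus> y [^] Suc n"
  proof -
    have "(\<Oplus>k\<in>{..Suc n}. [(Suc n choose k)] \<cdot> (x [^] k \<otimes> y [^] (Suc n - k)))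
       = (\<Oplus>k\<in>{..n}. [(Suc n choose Suc k)] \<cdot> (x [^] Suc k \<otimes> y [^] (n - k))) \<oplus> y [^] Suc n"
      using x y by (subst finsum_Suc2) auto
    also have "(\<Oplus>k\<in>{..n}. [(Suc n choose Suc k)] \<cdot> (x [^] Suc k \<otimes> y [^] (n - k)))
       = (\<Oplus>k\<in>{..n}. [(n choose k)] \<cdot> (x [^] Suc k \<otimes> y [^] (n - k)) \<oplus> [(n choose Suc k)] \<cdot> (x [^] Suc k \<otimes> y [^] (n - k)))"
      using x y by (intro finsum_cong') (auto simp: add.nat_pow_mult)
    also have "\<dots> = (\<Oplus>k\<in>{..n}. [(n choose k)] \<cdot> (x [^] Suc k \<otimes> y [^] (n - k)))
       \<oplus> (\<Oplus>k\<in>{..n}. [(n choose Suc k)] \<cdot> (x [^] Suc k \<otimes> y [^] (n - k)))"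
      using x y by (subst finsum_addf) auto
    finally show ?thesis .
  qed
  ultimately show ?case using x y
    by (simp add: a_ac finsum_closed)
qed


lemma (in cring) frobenius:
  assumes p: "normalization_semidom_class.prime (p::nat)" and ch: "[p] \<cdot> \<one> = \<zero>"
    and x: "x \<in> carrier R" and y: "y \<in> carrier R"
  shows "(x \<oplus> y) [^] p = x [^] p \<oplus> y [^] p"
proof -
  have p2: "p \<ge> 2" using p prime_ge_2_nat by blast
  define f where "f = (\<lambda>k. [(p choose k)] \<cdot> (x [^] k \<otimes> y [^] (p - k)))"
  have fc: "f \<in> A \<rightarrow> carrier R" for A unfolding f_def using x y by auto
  have z: "f k = \<zero>" if "k \<in> {1..<p}" for k
  proof -
    from that have "p dvd (p choose k)" using p by (intro dvd_choose_prime) auto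
    then obtain c where c: "(p choose k) = p * c" by blast
    have "[p] \<cdot> (x [^] k \<otimes> y [^] (p - k)) = [p] \<cdot> (\<one> \<otimes> (x [^] k \<otimes> y [^] (p - k)))"
      using x y by simp
    also have "\<dots> = \<zero>" using x y by (subst add_pow_ldistr[symmetric]) (auto simp: ch)
    finally have "[p] \<cdot> (x [^] k \<otimes> y [^] (p - k)) = \<zero>" .
    then show ?thesis unfolding f_def c using x y
      by (simp add: add.nat_pow_pow[symmetric])
  qed
  have "{..p} = insert 0 (insert p {1..<p})" using p2 by auto
  then have "(x \<oplus> y) [^] p = finsum R f (insert 0 (insert p {1..<p}))"
    using binomial_alg[OF x y] f_def by simp
  also have "\<dots> = f 0 \<oplus> (f p \<oplus> finsum R f {1..<p})"
    using p2 fc[of UNIV] by (simp add: finsum_insert Pi_def)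
  also have "finsum R f {1..<p} = \<zero>"
  proof -
    have "finsum R f {1..<p} = finsum R (\<lambda>k. \<zero>) {1..<p}"
      using z by (intro finsum_cong') auto
    then show ?thesis by simp
  qed
  finally show ?thesis unfolding f_def using x y by (simp add: a_ac)
qed

lemma (in cring) frobenius_pow:
  assumes p: "normalization_semidom_class.prime (p::nat)" and ch: "[p] \<cdot> \<one> = \<zero>"
    and x: "x \<in> carrier R" and y: "y \<in> carrier R"
  shows "(x \<oplus> y) [^] (p ^ m) = x [^] (p ^ m) \<oplus> y [^] (p ^ m)"
proof (induction m)
  case 0
  then show ?case using x y by simp
next
  case (Suc m)
  have "(x \<oplus> y) [^] (p ^ Suc m) = ((x \<oplus> y) [^] (p ^ m)) [^] p"
    using x y by (simp add: nat_pow_pow mult.commute)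
  also have "\<dots> = (x [^] (p ^ m)) [^] p \<oplus> (y [^] (p ^ m)) [^] p"
    using Suc frobenius[OF p ch] x y by simp
  also have "\<dots> = x [^] (p ^ Suc m) \<oplus> y [^] (p ^ Suc m)"
    using x y by (simp add: nat_pow_pow mult.commute)
  finally show ?case .
qed


primrec geo :: "('a, 'b) ring_scheme \<Rightarrow> 'a \<Rightarrow> 'a \<Rightarrow> nat \<Rightarrow> 'a" where
  "geo R c x 0 = \<zero>\<^bsub>R\<^esub>"
| "geo R c x (Suc n) = c \<otimes>\<^bsub>R\<^esub> geo R c x n \<oplus>\<^bsub>R\<^esub> x [^]\<^bsub>R\<^esub> n"

lemma (in ring) geo_closed:
  "c \<in> carrier R \<Longrightarrow> x \<in> carrier R \<Longrightarrow> geo R c x n \<in> carrier R"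
  by (induction n) auto

lemma (in cring) geo_tele:
  assumes c: "c \<in> carrier R" and x: "x \<in> carrier R"
  shows "(x \<ominus> c) \<otimes> geo R c x n = x [^] n \<ominus> c [^] n"
proof (induction n)
  case 0
  then show ?case using x c by (simp add: minus_eq r_neg)
next
  case (Suc n)
  have g: "geo R c x n \<in> carrier R" using geo_closed c x by blast
  have "(x \<ominus> c) \<otimes> geo R c x (Suc n) = c \<otimes> ((x \<ominus> c) \<otimes> geo R c x n) \<oplus> (x \<ominus> c) \<otimes> x [^] n"
  proof -
    have xn: "x [^] n \<in> carrier R" using x by simp
    show ?thesis using g c x xn by (simp only: geo.simps) algebra
  qed
  also have "\<dots> = c \<otimes> (x [^] n \<ominus> c [^] n) \<oplus> (x \<ominus> c) \<otimes> x [^] n" using Suc by simp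
  also have "\<dots> = x [^] Suc n \<ominus> c [^] Suc n"
  proof -
    have xn: "x [^] n \<in> carrier R" "c [^] n \<in> carrier R" using x c by simp_all
    show ?thesis using c x xn by (simp only: nat_pow_Suc) algebra
  qed
  finally show ?case .
qed

lemma (in cring) geo_same:
  assumes a: "a \<in> carrier R"
  shows "geo R a a (Suc n) = [Suc n] \<cdot> (a [^] n)"
proof (induction n)
  case 0
  then show ?case using a by simp
next
  case (Suc n)
  have "geo R a a (Suc (Suc n)) = a \<otimes> ([Suc n] \<cdot> (a [^] n)) \<oplus> a [^] Suc n"
    using Suc by simp
  also have "\<dots> = [Suc n] \<cdot> (a [^] Suc n) \<oplus> a [^] Suc n"
    using a by (simp add: add_pow_rdistr r_distr m_comm)
  also have "\<dots> = [Suc (Suc n)] \<cdot> (a [^] Suc n)"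
    by (simp only: add.nat_pow_Suc[symmetric])
  finally show ?case .
qed

lemma (in ring_hom_ring) geo_hom:
  "c \<in> carrier R \<Longrightarrow> x \<in> carrier R \<Longrightarrow> h (geo R c x n) = geo S (h c) (h x) n"
proof (induction n)
  case 0 then show ?case by simp
next
  case (Suc n)
  have "geo R c x n \<in> carrier R" using Suc(2,3) R.geo_closed by blast
  then show ?case using Suc by (simp add: hom_nat_pow)
qed

lemma (in residues) add_pow_one: "[k] \<cdot> \<one> = int k mod m"
proof (induction k)
  case 0 then show ?case by (simp add: res_zero_eq)
next
  case (Suc k) then show ?case by (simp add: res_add_eq res_one_eq mod_add_right_eq ac_simps)
qed

lemma (in ring_hom_ring) hom_add_pow_one: "h ([(k::nat)] \<cdot>\<^bsub>R\<^esub> \<one>\<^bsub>R\<^esub>) = [k] \<cdot>\<^bsub>S\<^esub> \<one>\<^bsub>S\<^esub>"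
proof (induction k)
  case 0 then show ?case by simp
next
  case (Suc k)
  have "[k] \<cdot>\<^bsub>R\<^esub> \<one>\<^bsub>R\<^esub> \<in> carrier R" by simp
  then show ?case using Suc by simp
qed

lemma mset_card_le1:
  assumes "\<And>x. count M x \<le> 1"
  shows "size M = card (set_mset M)"
proof -
  have "M = mset_set (set_mset M)"
    by (rule multiset_eqI) (metis assms count_mset_set(1,3) finite_set_mset le_antisym
        not_in_iff count_greater_zero_iff less_one not_le)
  then show ?thesis by (metis size_mset_set)
qed




lemma (in field) no_double_root:
  assumes chq: "[q] \<cdot> \<one> = \<zero>" and q2: "(q::nat) \<ge> 2"
    and a: "a \<in> carrier R" and aq: "a [^] q = a"
  shows "\<not> ([\<one>, \<ominus> a] [^]\<^bsub>poly_ring R\<^esub> (2::nat)) pdivides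
            (var R [^]\<^bsub>poly_ring R\<^esub> q \<ominus>\<^bsub>poly_ring R\<^esub> var R)"
proof
  let ?P = "poly_ring R"
  interpret PL: domain ?P using univ_poly_is_domain[OF carrier_is_subring] .
  define D where "D = [\<one>, \<ominus> a]"
  define c where "c = poly_of_const a"
  define x where "x = var R"
  have xc: "x \<in> carrier ?P" unfolding x_def using var_closed(1)[OF carrier_is_subring] .
  interpret CE: ring_hom_ring "R \<lparr> carrier := carrier R \<rparr>" ?P poly_of_const
    using canonical_embedding_ring_hom[OF carrier_is_subring] .
  have cc: "c \<in> carrier ?P" unfolding c_def using CE.hom_closed a by simp
  have Dx: "x \<ominus>\<^bsub>?P\<^esub> c = D"
  proof -
    have "x \<ominus>\<^bsub>?P\<^esub> c = poly_add x (map (\<lambda>b. \<ominus> b) c)"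
      unfolding a_minus_def univ_poly_add using univ_poly_a_inv_def'[OF carrier_is_subring cc] by simp
    also have "\<dots> = D" unfolding x_def var_def c_def D_def poly_of_const_def using a by auto
    finally show ?thesis .
  qed
  have Dc: "D \<in> carrier ?P" using Dx xc cc by auto
  have Dnz: "D \<noteq> \<zero>\<^bsub>?P\<^esub>" unfolding D_def univ_poly_zero by simp
  have cq: "c [^]\<^bsub>?P\<^esub> q = c"
  proof -
    have "poly_of_const (a [^]\<^bsub>R \<lparr> carrier := carrier R \<rparr>\<^esub> q) = poly_of_const a [^]\<^bsub>?P\<^esub> q"
      using CE.hom_nat_pow a by simp
    moreover have "a [^]\<^bsub>R \<lparr> carrier := carrier R \<rparr>\<^esub> q = a [^] q" by (simp add: nat_pow_def)
    ultimately show ?thesis unfolding c_def using aq by simp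
  qed
  define G where "G = geo ?P c x q"
  have Gc: "G \<in> carrier ?P" unfolding G_def using PL.geo_closed cc xc by blast
  have tele: "D \<otimes>\<^bsub>?P\<^esub> G = x [^]\<^bsub>?P\<^esub> q \<ominus>\<^bsub>?P\<^esub> c"
    using PL.geo_tele[OF cc xc, of q] Dx cq unfolding G_def by simp
  have Pfac: "x [^]\<^bsub>?P\<^esub> q \<ominus>\<^bsub>?P\<^esub> x = D \<otimes>\<^bsub>?P\<^esub> (G \<ominus>\<^bsub>?P\<^esub> \<one>\<^bsub>?P\<^esub>)"
  proof -
    have xq: "x [^]\<^bsub>?P\<^esub> q \<in> carrier ?P" using xc by simp
    have "D \<otimes>\<^bsub>?P\<^esub> (G \<ominus>\<^bsub>?P\<^esub> \<one>\<^bsub>?P\<^esub>) = D \<otimes>\<^bsub>?P\<^esub> G \<ominus>\<^bsub>?P\<^esub> D"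
      using Dc Gc by (simp add: a_minus_def PL.r_distr PL.r_minus)
    also have "\<dots> = (x [^]\<^bsub>?P\<^esub> q \<ominus>\<^bsub>?P\<^esub> c) \<ominus>\<^bsub>?P\<^esub> (x \<ominus>\<^bsub>?P\<^esub> c)"
      using tele Dx by simp
    also have "\<dots> = x [^]\<^bsub>?P\<^esub> q \<ominus>\<^bsub>?P\<^esub> x"
      using xq xc cc by (simp add: a_minus_def PL.minus_add PL.a_ac PL.r_neg PL.l_neg PL.r_neg1 PL.r_neg2)
    finally show ?thesis by simp
  qed
  assume "([\<one>, \<ominus> a] [^]\<^bsub>?P\<^esub> (2::nat)) pdivides (var R [^]\<^bsub>?P\<^esub> q \<ominus>\<^bsub>?P\<^esub> var R)"
  then obtain H where Hc: "H \<in> carrier ?P"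
    and HH: "x [^]\<^bsub>?P\<^esub> q \<ominus>\<^bsub>?P\<^esub> x = (D [^]\<^bsub>?P\<^esub> (2::nat)) \<otimes>\<^bsub>?P\<^esub> H"
    unfolding pdivides_def D_def x_def by (auto elim!: dividesE)
  have "D \<otimes>\<^bsub>?P\<^esub> (G \<ominus>\<^bsub>?P\<^esub> \<one>\<^bsub>?P\<^esub>) = D \<otimes>\<^bsub>?P\<^esub> (D \<otimes>\<^bsub>?P\<^esub> H)"
    using HH Pfac Dc Hc by (simp add: numeral_2_eq_2 PL.m_assoc)
  then have GH: "G \<ominus>\<^bsub>?P\<^esub> \<one>\<^bsub>?P\<^esub> = D \<otimes>\<^bsub>?P\<^esub> H"
    using PL.m_lcancel[OF Dnz Dc] Gc Hc Dc by simp
  interpret E: ring_hom_cring ?P R "\<lambda>p. eval p a"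
    using eval_cring_hom[OF carrier_is_subring a] .
  have Ec: "eval c a = a" unfolding c_def poly_of_const_def using a by auto
  have Ex: "eval x a = a" unfolding x_def using eval_var a by simp
  have ED: "eval D a = \<zero>"
  proof -
    have "eval D a = eval (x \<oplus>\<^bsub>?P\<^esub> \<ominus>\<^bsub>?P\<^esub> c) a" using Dx by (simp add: a_minus_def)
    also have "\<dots> = a \<oplus> \<ominus> a" using xc cc Ec Ex by simp
    also have "\<dots> = \<zero>" using r_neg[OF a] .
    finally show ?thesis .
  qed
  have EG: "eval G a = \<zero>"
  proof -
    have "eval G a = geo R a a q" unfolding G_def using E.ring.geo_hom[OF cc xc] Ec Ex by simp
    also have "\<dots> = geo R a a (Suc (q - 1))" using q2 by simp
    also have "\<dots> = [Suc (q - 1)] \<cdot> (a [^] (q - 1))" using geo_same a by blast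
    also have "\<dots> = [q] \<cdot> (\<one> \<otimes> a [^] (q - 1))" using q2 a by simp
    also have "\<dots> = \<zero>" using a chq by (simp only: add_pow_ldistr[symmetric] one_closed nat_pow_closed) simp
    finally show ?thesis .
  qed
  have "eval (G \<ominus>\<^bsub>?P\<^esub> \<one>\<^bsub>?P\<^esub>) a = \<ominus> \<one>"
    using EG Gc unfolding a_minus_def by simp
  moreover have "eval (D \<otimes>\<^bsub>?P\<^esub> H) a = \<zero>" using ED Dc Hc by simp
  ultimately have "\<ominus> \<one> = \<zero>" using GH by simp
  then show False by (metis minus_minus one_closed one_not_zero minus_zero)
qed


lemma (in algebraic_closure) card_roots_xq:
  assumes chq: "[q] \<cdot> \<one> = \<zero>" and q2: "(q::nat) \<ge> 2"
  shows "finite {x \<in> carrier L. x [^] q = x} \<and> card {x \<in> carrier L. x [^] q = x} = q"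
proof -
  have sK: "subring K L" using subfieldE(1)[OF subfield_axioms] .
  let ?P = "poly_ring L"
  let ?Q = "univ_poly L K"
  interpret PL: domain ?P using univ_poly_is_domain[OF carrier_is_subring] .
  interpret PK: domain ?Q using univ_poly_is_domain[OF sK] .
  define P where "P = var L [^]\<^bsub>?Q\<^esub> q \<ominus>\<^bsub>?Q\<^esub> var L"
  have vK: "var L \<in> carrier ?Q" using var_closed(1)[OF sK] .
  have vL: "var L \<in> carrier ?P" using var_closed(1)[OF carrier_is_subring] .
  have PK: "P \<in> carrier ?Q" unfolding P_def using vK by simp
  have Peq: "P = var L [^]\<^bsub>?P\<^esub> q \<ominus>\<^bsub>?P\<^esub> var L"
  proof -
    have "var L [^]\<^bsub>?Q\<^esub> q = var L [^]\<^bsub>?P\<^esub> q"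
      using unitary_monom_eq_var_pow[OF sK, of q] unitary_monom_eq_var_pow[OF carrier_is_subring, of q]
      by simp
    then show ?thesis unfolding P_def using univ_poly_a_minus_consistent[OF sK vK] by simp
  qed
  have PL: "P \<in> carrier ?P" unfolding Peq using vL by simp
  have degP: "degree P = q"
  proof -
    have eq: "P = poly_add (monom \<one> q) (map (\<lambda>b. \<ominus> b) (var L))"
      unfolding Peq a_minus_def univ_poly_add
      using unitary_monom_eq_var_pow[OF carrier_is_subring, of q]
        univ_poly_a_inv_def'[OF carrier_is_subring vL] by (simp del: poly_add.simps)
    have pA: "polynomial (carrier L) (monom \<one> q)" using carrier_is_subring by (intro monom_is_polynomial) auto
    have pB: "polynomial (carrier L) (map (\<lambda>b. \<ominus> b) (var L))"
      unfolding var_def by (intro polynomialI) auto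
    have dA: "degree (monom \<one> q) = q" unfolding monom_def by simp
    have dB: "degree (map (\<lambda>b. \<ominus> b) (var L)) = 1" unfolding var_def by simp
    have "degree (poly_add (monom \<one> q) (map (\<lambda>b. \<ominus> b) (var L))) = max q 1"
      using poly_add_degree_eq[OF carrier_is_subring pA pB] dA dB q2 by (simp del: poly_add.simps)
    then show ?thesis using eq q2 by simp
  qed
  have Pne: "P \<noteq> []" using degP q2 by auto
  have evP: "eval P x = x [^] q \<ominus> x" if x: "x \<in> carrier L" for x
  proof -
    interpret E: ring_hom_cring ?P L "\<lambda>p. eval p x"
      using eval_cring_hom[OF carrier_is_subring x] .
    show ?thesis unfolding Peq a_minus_def using vL E.ring.hom_nat_pow eval_var[OF x] by simp
  qed
  have roots_set: "set_mset (roots P) = {x \<in> carrier L. x [^] q = x}"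
    using roots_mem_iff_is_root[OF PL] evP Pne unfolding is_root_def
    by (auto simp del: r_right_minus_eq simp add: r_right_minus_eq[symmetric])
  have spl: "splitted P" using roots_over_subfield PK by blast
  have cnt: "count (roots P) a \<le> 1" for a
  proof (rule ccontr)
    assume "\<not> count (roots P) a \<le> 1"
    then have c2: "2 \<le> alg_mult P a" using alg_mult_eq_count_roots[OF PL] by simp
    then have "a \<in># roots P" using alg_mult_eq_count_roots[OF PL]
      by (metis count_greater_zero_iff le_trans one_le_numeral not_one_le_zero le_0_eq not_le)
    then have a: "a \<in> carrier L" "a [^] q = a" using roots_set by auto
    have "([\<one>, \<ominus> a] [^]\<^bsub>?P\<^esub> (2::nat)) pdivides P"
      using le_alg_mult_imp_pdivides[OF a(1) PL c2] .
    then show False using no_double_root[OF chq q2 a] unfolding Peq by simp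
  qed
  have "size (roots P) = q" using spl degP unfolding splitted_def by simp
  then have "card (set_mset (roots P)) = q" using mset_card_le1[OF cnt] by simp
  then show ?thesis using roots_set by (metis finite_set_mset)
qed

lemma finite_field_exists:
  fixes p m :: nat
  assumes p: "prime p" and m: "m \<ge> 1"
  shows "\<exists>(L :: ((int list \<times> nat) multiset \<Rightarrow> int) ring) S. field L \<and> S \<subseteq> carrier L \<and>
     \<zero>\<^bsub>L\<^esub> \<in> S \<and> \<one>\<^bsub>L\<^esub> \<in> S \<and> (\<forall>x\<in>S. \<forall>y\<in>S. x \<oplus>\<^bsub>L\<^esub> y \<in> S \<and> x \<otimes>\<^bsub>L\<^esub> y \<in> S) \<and>
     (\<forall>x\<in>S. \<ominus>\<^bsub>L\<^esub> x \<in> S) \<and> (\<forall>x\<in>S - {\<zero>\<^bsub>L\<^esub>}. inv\<^bsub>L\<^esub> x \<in> S) \<and> finite S \<and> card S = p ^ m"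
proof -
  interpret Zp: residues_prime p "residue_ring p" by unfold_locales (rule p)
  obtain L :: "((int list \<times> nat) multiset \<Rightarrow> int) ring"
    where alg: "algebraic_closure L (Zp.indexed_const ` carrier (residue_ring p))"
      and hom: "Zp.indexed_const \<in> ring_hom (residue_ring p) L"
    by (rule Zp.exists_closure)
  define K :: "((int list \<times> nat) multiset \<Rightarrow> int) set" where "K = Zp.indexed_const ` carrier (residue_ring p)"
  interpret L: algebraic_closure L K using alg unfolding K_def .
  interpret H: ring_hom_ring "residue_ring p" L Zp.indexed_const
    using hom by (intro ring_hom_ringI2) (simp_all add: Zp.ring_axioms L.ring_axioms)
  have ch: "[p] \<cdot>\<^bsub>L\<^esub> \<one>\<^bsub>L\<^esub> = \<zero>\<^bsub>L\<^esub>"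
  proof -
    have "[p] \<cdot>\<^bsub>residue_ring p\<^esub> \<one>\<^bsub>residue_ring p\<^esub> = \<zero>\<^bsub>residue_ring p\<^esub>"
      using Zp.add_pow_one[of p] by (simp add: Zp.res_zero_eq)
    then show ?thesis using H.hom_add_pow_one[of p] by simp
  qed
  define q where "q = p ^ m"
  have q2: "q \<ge> 2"
  proof -
    have "p \<ge> 2" using p prime_ge_2_nat by blast
    moreover have "p ^ 1 \<le> p ^ m" using m \<open>p \<ge> 2\<close> by (intro power_increasing) auto
    ultimately show ?thesis unfolding q_def by simp
  qed
  have chq: "[q] \<cdot>\<^bsub>L\<^esub> \<one>\<^bsub>L\<^esub> = \<zero>\<^bsub>L\<^esub>"
  proof -
    have "q = p * p ^ (m - 1)" unfolding q_def using m by (metis Suc_diff_le diff_Suc_1 power_Suc)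
    then have "[q] \<cdot>\<^bsub>L\<^esub> \<one>\<^bsub>L\<^esub> = [(p ^ (m - 1))] \<cdot>\<^bsub>L\<^esub> ([p] \<cdot>\<^bsub>L\<^esub> \<one>\<^bsub>L\<^esub>)"
      by (simp add: L.add.nat_pow_pow)
    then show ?thesis using ch by simp
  qed
  have frob: "(x \<oplus>\<^bsub>L\<^esub> y) [^]\<^bsub>L\<^esub> q = x [^]\<^bsub>L\<^esub> q \<oplus>\<^bsub>L\<^esub> y [^]\<^bsub>L\<^esub> q"
    if "x \<in> carrier L" "y \<in> carrier L" for x y
    unfolding q_def by (rule L.frobenius_pow[OF p ch that])
  define S where "S = {x \<in> carrier L. x [^]\<^bsub>L\<^esub> q = x}"
  have S0: "\<zero>\<^bsub>L\<^esub> \<in> S" unfolding S_def using q2 by (simp add: L.nat_pow_zero)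
  have S1: "\<one>\<^bsub>L\<^esub> \<in> S" unfolding S_def by simp
  have Sadd: "x \<oplus>\<^bsub>L\<^esub> y \<in> S" if "x \<in> S" "y \<in> S" for x y
    using that frob unfolding S_def by auto
  have Smult: "x \<otimes>\<^bsub>L\<^esub> y \<in> S" if "x \<in> S" "y \<in> S" for x y
    using that unfolding S_def by (auto simp: L.nat_pow_distrib)
  have Sneg: "\<ominus>\<^bsub>L\<^esub> x \<in> S" if "x \<in> S" for x
  proof -
    have x: "x \<in> carrier L" "x [^]\<^bsub>L\<^esub> q = x" using that S_def by auto
    have "\<zero>\<^bsub>L\<^esub> = (x \<oplus>\<^bsub>L\<^esub> \<ominus>\<^bsub>L\<^esub> x) [^]\<^bsub>L\<^esub> q" using x q2 by (simp add: L.r_neg L.nat_pow_zero)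
    also have "\<dots> = x \<oplus>\<^bsub>L\<^esub> (\<ominus>\<^bsub>L\<^esub> x) [^]\<^bsub>L\<^esub> q" using frob x by simp
    finally have e: "(\<ominus>\<^bsub>L\<^esub> x) [^]\<^bsub>L\<^esub> q \<oplus>\<^bsub>L\<^esub> x = \<zero>\<^bsub>L\<^esub>"
      using x by (simp add: L.a_comm)
    have "\<ominus>\<^bsub>L\<^esub> x = (\<ominus>\<^bsub>L\<^esub> x) [^]\<^bsub>L\<^esub> q"
      by (rule L.minus_equality[OF e]) (use x in auto)
    then have "(\<ominus>\<^bsub>L\<^esub> x) [^]\<^bsub>L\<^esub> q = \<ominus>\<^bsub>L\<^esub> x" by simp
    then show ?thesis using x S_def by auto
  qed
  have Sinv: "inv\<^bsub>L\<^esub> x \<in> S" if "x \<in> S" "x \<noteq> \<zero>\<^bsub>L\<^esub>" for x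
  proof -
    have x: "x \<in> carrier L" "x [^]\<^bsub>L\<^esub> q = x" using that S_def by auto
    have u: "x \<in> Units L" using x that L.field_Units by auto
    have ic: "inv\<^bsub>L\<^esub> x \<in> carrier L" using u by simp
    have "x \<otimes>\<^bsub>L\<^esub> (inv\<^bsub>L\<^esub> x) [^]\<^bsub>L\<^esub> q = (x \<otimes>\<^bsub>L\<^esub> inv\<^bsub>L\<^esub> x) [^]\<^bsub>L\<^esub> q"
      using x ic by (simp add: L.nat_pow_distrib)
    also have "\<dots> = \<one>\<^bsub>L\<^esub>" using u by simp
    finally have "inv\<^bsub>L\<^esub> x = (inv\<^bsub>L\<^esub> x) [^]\<^bsub>L\<^esub> q"
      using x ic by (intro L.comm_inv_char) auto
    then show ?thesis using ic S_def by auto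
  qed
  have cardS: "finite S \<and> card S = q" using L.card_roots_xq[OF chq q2] unfolding S_def .
  show ?thesis
    apply (rule exI[of _ L], rule exI[of _ S])
    using L.field_axioms S0 S1 Sadd Smult Sneg Sinv cardS unfolding q_def[symmetric]
    by (intro conjI) (auto simp: S_def)
qed



lemma edge_eq_iff:
  fixes i j k l :: nat
  assumes "i \<noteq> j" "k \<noteq> l"
  shows "({{i}, {i, j}} = {{k}, {k, l}}) \<longleftrightarrow> i = k \<and> j = l"
  using assms by (auto simp: doubleton_eq_iff)

lemma edge_adj_iff:
  fixes i j k l :: nat
  assumes "i \<noteq> j" "k \<noteq> l"
  shows "line_adj {{i}, {i, j}} {{k}, {k, l}} \<longleftrightarrow> (i = k \<and> j \<noteq> l) \<or> (i = l \<and> j = k)"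
  using assms unfolding line_adj_def edge_eq_iff[OF assms]
  by (auto simp: doubleton_eq_iff)

lemma line_verts_B:
  "line_verts (B_verts n) B_adj = {{{i}, {i, j}} | i j. i \<in> {1..n} \<and> j \<in> {1..n} \<and> i \<noteq> j}"
proof (intro equalityI subsetI)
  fix e assume "e \<in> line_verts (B_verts n) B_adj"
  then obtain v w where e: "e = {v, w}" and v: "v \<in> B_verts n" and w: "w \<in> B_verts n"
    and vw: "v \<subset> w \<or> w \<subset> v"
    unfolding line_verts_def B_adj_def by auto
  have key: "\<exists>i j. {v, w} = {{i}, {i, j}} \<and> i \<in> {1..n} \<and> j \<in> {1..n} \<and> i \<noteq> j"
    if v: "v \<in> B_verts n" and w: "w \<in> B_verts n" and vw: "v \<subset> w" for v w
  proof -
    have fw: "finite w" using w unfolding B_verts_def by (auto intro: finite_subset)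
    have "card v < card w" using psubset_card_mono[OF fw vw] .
    moreover have "card v = 1 \<or> card v = 2" using v unfolding B_verts_def by simp
    moreover have "card w = 1 \<or> card w = 2" using w unfolding B_verts_def by simp
    ultimately have cv: "card v = 1" and cw: "card w = 2" by linarith+
    obtain i where vi: "v = {i}" using cv card_1_singletonE by blast
    from cw obtain a b where wab: "w = {a, b}" "a \<noteq> b" by (auto simp: card_2_iff)
    have "i \<in> w" using vi vw by auto
    then have "w = {i, (if i = a then b else a)} \<and> i \<noteq> (if i = a then b else a)" using wab by auto
    then obtain j where wj: "w = {i, j}" "i \<noteq> j" by blast
    have "i \<in> {1..n}" "j \<in> {1..n}" using w wj unfolding B_verts_def by auto
    then show ?thesis using vi wj by blast
  qed
  from vw show "e \<in> {{{i}, {i, j}} | i j. i \<in> {1..n} \<and> j \<in> {1..n} \<and> i \<noteq> j}"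
  proof
    assume "v \<subset> w" then show ?thesis using key[OF v w] e by auto
  next
    assume "w \<subset> v" then show ?thesis using key[OF w v] e by (auto simp: insert_commute)
  qed
next
  fix e assume "e \<in> {{{i}, {i, j}} | i j. i \<in> {1..n} \<and> j \<in> {1..n} \<and> i \<noteq> j}"
  then obtain i j where e: "e = {{i}, {i, j}}" "i \<in> {1..n}" "j \<in> {1..n}" "i \<noteq> j" by auto
  have "{i} \<in> B_verts n" "{i, j} \<in> B_verts n" using e unfolding B_verts_def by auto
  moreover have "{i} \<noteq> {i, j}" "B_adj {i} {i, j}" using e unfolding B_adj_def by auto
  ultimately show "e \<in> line_verts (B_verts n) B_adj" unfolding line_verts_def using e(1) by blast
qed

lemma cayley_transport:
  fixes H :: "('b, 'c) monoid_scheme" and V :: "'a set" and E :: "'a \<Rightarrow> 'a \<Rightarrow> bool"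
  assumes grp: "group H" and bij: "bij_betw \<psi> (carrier H) V"
    and Om: "\<Omega>0 \<subseteq> carrier H" "\<one>\<^bsub>H\<^esub> \<notin> \<Omega>0" "\<forall>s\<in>\<Omega>0. inv\<^bsub>H\<^esub> s \<in> \<Omega>0"
    and adj: "\<forall>g\<in>carrier H. \<forall>h\<in>carrier H. E (\<psi> g) (\<psi> h) \<longleftrightarrow> (\<exists>k\<in>\<Omega>0. h = g \<otimes>\<^bsub>H\<^esub> k)"
  shows "is_cayley_graph V E"
proof -
  interpret H: group H by (rule grp)
  define \<phi> where "\<phi> = inv_into (carrier H) \<psi>"
  have \<phi>\<psi>: "\<phi> (\<psi> g) = g" if "g \<in> carrier H" for g
    unfolding \<phi>_def using bij that bij_betw_inv_into_left by fast
  have \<psi>\<phi>: "\<psi> (\<phi> u) = u" if "u \<in> V" for u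
    unfolding \<phi>_def using bij that bij_betw_inv_into_right by fast
  have \<phi>c: "\<phi> u \<in> carrier H" if "u \<in> V" for u
    unfolding \<phi>_def using bij that by (metis bij_betw_def inv_into_into)
  have \<psi>c: "\<psi> g \<in> V" if "g \<in> carrier H" for g using bij that bij_betw_apply by fast
  have \<psi>inj: "g = h" if "g \<in> carrier H" "h \<in> carrier H" "\<psi> g = \<psi> h" for g h
    using bij that unfolding bij_betw_def inj_on_def by blast
  define G :: "'a monoid" where "G = \<lparr>carrier = V, monoid.mult = (\<lambda>u v. \<psi> (\<phi> u \<otimes>\<^bsub>H\<^esub> \<phi> v)), one = \<psi> \<one>\<^bsub>H\<^esub>\<rparr>"
  have Gc: "carrier G = V" and Gm: "\<And>u v. u \<otimes>\<^bsub>G\<^esub> v = \<psi> (\<phi> u \<otimes>\<^bsub>H\<^esub> \<phi> v)" and G1: "\<one>\<^bsub>G\<^esub> = \<psi> \<one>\<^bsub>H\<^esub>"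
    unfolding G_def by simp_all
  have grpG: "group G"
  proof (rule groupI)
    show "x \<otimes>\<^bsub>G\<^esub> y \<in> carrier G" if "x \<in> carrier G" "y \<in> carrier G" for x y
      using that Gc Gm \<phi>c \<psi>c by simp
    show "\<one>\<^bsub>G\<^esub> \<in> carrier G" using Gc G1 \<psi>c by simp
    show "x \<otimes>\<^bsub>G\<^esub> y \<otimes>\<^bsub>G\<^esub> z = x \<otimes>\<^bsub>G\<^esub> (y \<otimes>\<^bsub>G\<^esub> z)"
      if "x \<in> carrier G" "y \<in> carrier G" "z \<in> carrier G" for x y z
      using that Gc Gm \<phi>c \<phi>\<psi> by (simp add: H.m_assoc)
    show "\<one>\<^bsub>G\<^esub> \<otimes>\<^bsub>G\<^esub> x = x" if "x \<in> carrier G" for x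
      using that Gc Gm G1 \<phi>c \<phi>\<psi> \<psi>\<phi> by simp
    show "\<exists>y\<in>carrier G. y \<otimes>\<^bsub>G\<^esub> x = \<one>\<^bsub>G\<^esub>" if "x \<in> carrier G" for x
    proof (intro bexI)
      show "\<psi> (inv\<^bsub>H\<^esub> (\<phi> x)) \<otimes>\<^bsub>G\<^esub> x = \<one>\<^bsub>G\<^esub>" using that Gc Gm G1 \<phi>c \<phi>\<psi> by simp
      show "\<psi> (inv\<^bsub>H\<^esub> (\<phi> x)) \<in> carrier G" using that Gc \<phi>c \<psi>c by simp
    qed
  qed
  interpret G: group G by (rule grpG)
  have \<phi>inv: "\<phi> (inv\<^bsub>G\<^esub> u) = inv\<^bsub>H\<^esub> (\<phi> u)" if u: "u \<in> V" for u
  proof -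
    have ic: "inv\<^bsub>G\<^esub> u \<in> V" using u Gc by (metis G.inv_closed)
    have "inv\<^bsub>G\<^esub> u \<otimes>\<^bsub>G\<^esub> u = \<one>\<^bsub>G\<^esub>" using u Gc by simp
    then have "\<psi> (\<phi> (inv\<^bsub>G\<^esub> u) \<otimes>\<^bsub>H\<^esub> \<phi> u) = \<psi> \<one>\<^bsub>H\<^esub>" using Gm G1 by simp
    then have "\<phi> (inv\<^bsub>G\<^esub> u) \<otimes>\<^bsub>H\<^esub> \<phi> u = \<one>\<^bsub>H\<^esub>" using \<psi>inj ic u \<phi>c by simp
    then show ?thesis using ic u \<phi>c H.inv_equality by metis
  qed
  show ?thesis
    unfolding is_cayley_graph_def
  proof (intro exI conjI)
    show "group G" by (rule grpG)
    show "\<psi> ` \<Omega>0 \<subseteq> carrier G" using Om(1) \<psi>c Gc by auto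
    show "\<one>\<^bsub>G\<^esub> \<notin> \<psi> ` \<Omega>0" using Om(1,2) \<psi>inj G1 by auto
    show "\<forall>s\<in>\<psi> ` \<Omega>0. inv\<^bsub>G\<^esub> s \<in> \<psi> ` \<Omega>0"
    proof
      fix s assume "s \<in> \<psi> ` \<Omega>0"
      then obtain g where g: "g \<in> \<Omega>0" "s = \<psi> g" by auto
      have gc: "g \<in> carrier H" using g Om(1) by auto
      have "\<phi> (inv\<^bsub>G\<^esub> s) = inv\<^bsub>H\<^esub> g" using \<phi>inv[of s] g gc \<psi>c \<phi>\<psi> by simp
      then have "inv\<^bsub>G\<^esub> s = \<psi> (inv\<^bsub>H\<^esub> g)" using \<psi>\<phi> g gc \<psi>c Gc G.inv_closed by metis
      then show "inv\<^bsub>G\<^esub> s \<in> \<psi> ` \<Omega>0" using Om(3) g by auto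
    qed
    show "bij_betw id V (carrier G)" using Gc by simp
    show "\<forall>x\<in>V. \<forall>y\<in>V. E x y \<longleftrightarrow> inv\<^bsub>G\<^esub> (id x) \<otimes>\<^bsub>G\<^esub> id y \<in> \<psi> ` \<Omega>0"
    proof (intro ballI)
      fix x y assume x: "x \<in> V" and y: "y \<in> V"
      have "inv\<^bsub>G\<^esub> x \<otimes>\<^bsub>G\<^esub> y = \<psi> (inv\<^bsub>H\<^esub> (\<phi> x) \<otimes>\<^bsub>H\<^esub> \<phi> y)" using Gm \<phi>inv x by simp
      have "E x y \<longleftrightarrow> E (\<psi> (\<phi> x)) (\<psi> (\<phi> y))" using x y \<psi>\<phi> by simp
      also have "\<dots> \<longleftrightarrow> (\<exists>k\<in>\<Omega>0. \<phi> y = \<phi> x \<otimes>\<^bsub>H\<^esub> k)" using adj x y \<phi>c by blast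
      also have "\<dots> \<longleftrightarrow> inv\<^bsub>H\<^esub> (\<phi> x) \<otimes>\<^bsub>H\<^esub> \<phi> y \<in> \<Omega>0"
      proof
        assume "\<exists>k\<in>\<Omega>0. \<phi> y = \<phi> x \<otimes>\<^bsub>H\<^esub> k"
        then obtain k where k: "k \<in> \<Omega>0" "\<phi> y = \<phi> x \<otimes>\<^bsub>H\<^esub> k" by blast
        then have "inv\<^bsub>H\<^esub> (\<phi> x) \<otimes>\<^bsub>H\<^esub> \<phi> y = k" using x \<phi>c Om(1)
          by (simp add: H.m_assoc[symmetric] subsetD)
        then show "inv\<^bsub>H\<^esub> (\<phi> x) \<otimes>\<^bsub>H\<^esub> \<phi> y \<in> \<Omega>0" using k by simp
      next
        assume "inv\<^bsub>H\<^esub> (\<phi> x) \<otimes>\<^bsub>H\<^esub> \<phi> y \<in> \<Omega>0"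
        moreover have "\<phi> y = \<phi> x \<otimes>\<^bsub>H\<^esub> (inv\<^bsub>H\<^esub> (\<phi> x) \<otimes>\<^bsub>H\<^esub> \<phi> y)"
          using x y \<phi>c by (simp add: H.m_assoc[symmetric])
        ultimately show "\<exists>k\<in>\<Omega>0. \<phi> y = \<phi> x \<otimes>\<^bsub>H\<^esub> k" by blast
      qed
      also have "\<dots> \<longleftrightarrow> \<psi> (inv\<^bsub>H\<^esub> (\<phi> x) \<otimes>\<^bsub>H\<^esub> \<phi> y) \<in> \<psi> ` \<Omega>0"
        using inj_on_image_mem_iff[of \<psi> "carrier H" _ \<Omega>0] bij Om(1) x y \<phi>c
        unfolding bij_betw_def by simp
      finally show "E x y \<longleftrightarrow> inv\<^bsub>G\<^esub> (id x) \<otimes>\<^bsub>G\<^esub> id y \<in> \<psi> ` \<Omega>0"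
        using Gm \<phi>inv x by simp
    qed
  qed
qed



lemma (in field) agl_cayley:
  fixes S :: "'a set" and n :: nat and \<gamma> :: "'a \<Rightarrow> nat"
  assumes SR: "S \<subseteq> carrier R" and S0: "\<zero> \<in> S" and S1: "\<one> \<in> S"
    and Sadd: "\<And>x y. x \<in> S \<Longrightarrow> y \<in> S \<Longrightarrow> x \<oplus> y \<in> S"
    and Smult: "\<And>x y. x \<in> S \<Longrightarrow> y \<in> S \<Longrightarrow> x \<otimes> y \<in> S"
    and Sneg: "\<And>x. x \<in> S \<Longrightarrow> \<ominus> x \<in> S"
    and Sinv: "\<And>x. x \<in> S \<Longrightarrow> x \<noteq> \<zero> \<Longrightarrow> inv x \<in> S"
    and bij: "bij_betw \<gamma> S {1..n}"
  shows "is_cayley_graph {{{i}, {i, j}} | i j. i \<in> {1..n} \<and> j \<in> {1..n} \<and> i \<noteq> j} line_adj"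
proof -
  have inR: "x \<in> carrier R" if "x \<in> S" for x using SR that by auto
  have invU: "inv x \<in> carrier R" "inv x \<otimes> x = \<one>" "x \<otimes> inv x = \<one>" "inv x \<noteq> \<zero>"
    if "x \<in> S" "x \<noteq> \<zero>" for x
  proof -
    have u: "x \<in> Units R" using that inR field_Units by auto
    show "inv x \<in> carrier R" "inv x \<otimes> x = \<one>" "x \<otimes> inv x = \<one>" using u by auto
    show "inv x \<noteq> \<zero>"
    proof
      assume "inv x = \<zero>"
      then have "\<zero> \<otimes> x = \<one>" using \<open>inv x \<otimes> x = \<one>\<close> by simp
      then have "\<one> = \<zero>" using inR[OF that(1)] by simp
      then show False by simp
    qed
  qed
  have \<gamma>inj: "a = b" if "a \<in> S" "b \<in> S" "\<gamma> a = \<gamma> b" for a b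
    using bij that unfolding bij_betw_def inj_on_def by blast
  define H :: "('a \<times> 'a) monoid" where
    "H = \<lparr>carrier = (S - {\<zero>}) \<times> S,
          monoid.mult = (\<lambda>x y. (fst x \<otimes> fst y, fst x \<otimes> snd y \<oplus> snd x)),
          one = (\<one>, \<zero>)\<rparr>"
  have Hc: "carrier H = (S - {\<zero>}) \<times> S"
    and Hm: "\<And>a b c d. (a, b) \<otimes>\<^bsub>H\<^esub> (c, d) = (a \<otimes> c, a \<otimes> d \<oplus> b)"
    and H1: "\<one>\<^bsub>H\<^esub> = (\<one>, \<zero>)"
    unfolding H_def by simp_all
  have grpH: "group H"
  proof (rule groupI)
    fix x y assume x: "x \<in> carrier H" and y: "y \<in> carrier H"
    obtain a b c d where xy: "x = (a, b)" "y = (c, d)" by fastforce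
    have "a \<otimes> c \<noteq> \<zero>" using x y xy Hc inR integral_iff by auto
    then show "x \<otimes>\<^bsub>H\<^esub> y \<in> carrier H" using x y xy Hc Hm Smult Sadd by auto
  next
    show "\<one>\<^bsub>H\<^esub> \<in> carrier H" using H1 Hc S0 S1 by simp
  next
    fix x y z assume x: "x \<in> carrier H" and y: "y \<in> carrier H" and z: "z \<in> carrier H"
    obtain a b c d e f where xyz: "x = (a, b)" "y = (c, d)" "z = (e, f)" by (metis surj_pair)
    have c: "a \<in> carrier R" "b \<in> carrier R" "c \<in> carrier R" "d \<in> carrier R" "e \<in> carrier R" "f \<in> carrier R"
      using x y z xyz Hc inR by auto
    have "a \<otimes> c \<otimes> e = a \<otimes> (c \<otimes> e)" "a \<otimes> c \<otimes> f \<oplus> (a \<otimes> d \<oplus> b) = a \<otimes> (c \<otimes> f \<oplus> d) \<oplus> b"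
      using c by (simp_all add: m_assoc r_distr a_assoc)
    then show "x \<otimes>\<^bsub>H\<^esub> y \<otimes>\<^bsub>H\<^esub> z = x \<otimes>\<^bsub>H\<^esub> (y \<otimes>\<^bsub>H\<^esub> z)" using xyz Hm by simp
  next
    fix x assume x: "x \<in> carrier H"
    obtain a b where xy: "x = (a, b)" by fastforce
    then show "\<one>\<^bsub>H\<^esub> \<otimes>\<^bsub>H\<^esub> x = x" using x Hc H1 Hm inR by auto
  next
    fix x assume x: "x \<in> carrier H"
    obtain a b where xy: "x = (a, b)" by fastforce
    have ab: "a \<in> S" "a \<noteq> \<zero>" "b \<in> S" using x xy Hc by auto
    show "\<exists>y\<in>carrier H. y \<otimes>\<^bsub>H\<^esub> x = \<one>\<^bsub>H\<^esub>"
    proof (intro bexI)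
      show "(inv a, \<ominus> (inv a \<otimes> b)) \<otimes>\<^bsub>H\<^esub> x = \<one>\<^bsub>H\<^esub>"
        using xy Hm H1 invU[OF ab(1,2)] inR[OF ab(3)] by (simp add: r_neg)
      show "(inv a, \<ominus> (inv a \<otimes> b)) \<in> carrier H"
        using Hc invU[OF ab(1,2)] Sinv[OF ab(1,2)] Sneg Smult ab by auto
    qed
  qed
  interpret H: group H by (rule grpH)
  define \<psi> where "\<psi> = (\<lambda>x::'a \<times> 'a. {{\<gamma> (snd x)}, {\<gamma> (snd x), \<gamma> (fst x \<oplus> snd x)}})"
  define V where "V = {{{i}, {i, j}} | i j. i \<in> {1..n} \<and> j \<in> {1..n} \<and> i \<noteq> j}"
  define \<Omega>0 where "\<Omega>0 = {(u, \<zero>) | u. u \<in> S \<and> u \<noteq> \<zero> \<and> u \<noteq> \<one>} \<union> {(\<ominus> \<one>, \<one>)}"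
  have neq: "\<gamma> b \<noteq> \<gamma> (a \<oplus> b)" if "a \<in> S" "a \<noteq> \<zero>" "b \<in> S" for a b
  proof
    assume "\<gamma> b = \<gamma> (a \<oplus> b)"
    then have "b = a \<oplus> b" using \<gamma>inj that Sadd by blast
    then show False using that inR by (metis add.r_cancel_one')
  qed
  have \<gamma>in: "\<gamma> x \<in> {1..n}" if "x \<in> S" for x using bij that bij_betw_apply by fast
  have bijH: "bij_betw \<psi> (carrier H) V"
    unfolding bij_betw_def
  proof
    show "inj_on \<psi> (carrier H)"
    proof (rule inj_onI)
      fix x y assume x: "x \<in> carrier H" and y: "y \<in> carrier H" and e: "\<psi> x = \<psi> y"
      obtain a b c d where xy: "x = (a, b)" "y = (c, d)" by fastforce
      have ab: "a \<in> S" "a \<noteq> \<zero>" "b \<in> S" "c \<in> S" "c \<noteq> \<zero>" "d \<in> S" using x y xy Hc by auto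
      have "\<gamma> b = \<gamma> d \<and> \<gamma> (a \<oplus> b) = \<gamma> (c \<oplus> d)"
        using e edge_eq_iff[OF neq[OF ab(1-3)] neq[OF ab(4-6)]] unfolding \<psi>_def xy by simp
      then have "b = d" "a \<oplus> b = c \<oplus> d" using \<gamma>inj ab Sadd by blast+
      then have "a = c" using ab inR by simp
      then show "x = y" using xy \<open>b = d\<close> by simp
    qed
    show "\<psi> ` carrier H = V"
    proof (intro equalityI subsetI)
      fix e assume "e \<in> \<psi> ` carrier H"
      then obtain a b where ab: "a \<in> S" "a \<noteq> \<zero>" "b \<in> S" "e = \<psi> (a, b)" using Hc by auto
      then show "e \<in> V" unfolding V_def \<psi>_def using neq[OF ab(1-3)] \<gamma>in Sadd by auto
    next
      fix e assume "e \<in> V"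
      then obtain i j where ij: "e = {{i}, {i, j}}" "i \<in> {1..n}" "j \<in> {1..n}" "i \<noteq> j"
        unfolding V_def by auto
      define b where "b = inv_into S \<gamma> i"
      define c where "c = inv_into S \<gamma> j"
      have b: "b \<in> S" "\<gamma> b = i" unfolding b_def using bij ij
        by (metis bij_betw_def inv_into_into, metis bij_betw_inv_into_right)
      have c: "c \<in> S" "\<gamma> c = j" unfolding c_def using bij ij
        by (metis bij_betw_def inv_into_into, metis bij_betw_inv_into_right)
      define a where "a = c \<ominus> b"
      have aS: "a \<in> S" unfolding a_def a_minus_def using Sadd Sneg b c by blast
      have ab: "a \<oplus> b = c" unfolding a_def a_minus_def using inR b c by (simp add: a_assoc l_neg)
      have "a \<noteq> \<zero>" using ab b c ij inR by auto
      then have "(a, b) \<in> carrier H" using Hc aS b by simp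
      moreover have "\<psi> (a, b) = e" unfolding \<psi>_def using ab b c ij by simp
      ultimately show "e \<in> \<psi> ` carrier H" by blast
    qed
  qed
  have m1: "\<ominus> \<one> \<noteq> \<zero>"
  proof
    assume "\<ominus> \<one> = \<zero>"
    then have "\<ominus> (\<ominus> \<one>) = \<ominus> \<zero>" by simp
    then show False by simp
  qed
  have Om1: "\<Omega>0 \<subseteq> carrier H" unfolding \<Omega>0_def using Hc S0 S1 Sneg m1 by auto
  have Om2: "\<one>\<^bsub>H\<^esub> \<notin> \<Omega>0" unfolding \<Omega>0_def H1 by auto
  have Om3: "\<forall>s\<in>\<Omega>0. inv\<^bsub>H\<^esub> s \<in> \<Omega>0"
  proof
    fix s assume s: "s \<in> \<Omega>0"
    show "inv\<^bsub>H\<^esub> s \<in> \<Omega>0"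
    proof (cases "s = (\<ominus> \<one>, \<one>)")
      case True
      have "s \<otimes>\<^bsub>H\<^esub> s = \<one>\<^bsub>H\<^esub>" using True Hm H1 by (simp add: l_minus r_minus l_neg)
      then have "inv\<^bsub>H\<^esub> s = s" using s Om1 H.inv_equality by blast
      then show ?thesis using s by simp
    next
      case False
      then obtain u where u: "s = (u, \<zero>)" "u \<in> S" "u \<noteq> \<zero>" "u \<noteq> \<one>" using s unfolding \<Omega>0_def by auto
      have "(inv u, \<zero>) \<otimes>\<^bsub>H\<^esub> s = \<one>\<^bsub>H\<^esub>" using u Hm H1 invU[OF u(2,3)] by simp
      moreover have "(inv u, \<zero>) \<in> carrier H" using Hc Sinv u S0 invU[OF u(2,3)] by auto
      ultimately have "inv\<^bsub>H\<^esub> s = (inv u, \<zero>)" using s Om1 H.inv_equality by blast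
      moreover have "inv u \<noteq> \<one>"
      proof
        assume "inv u = \<one>"
        then show False using invU[OF u(2,3)] u inR by simp
      qed
      ultimately show ?thesis unfolding \<Omega>0_def using Sinv u invU[OF u(2,3)] by auto
    qed
  qed
  have adj: "\<forall>g\<in>carrier H. \<forall>h\<in>carrier H. line_adj (\<psi> g) (\<psi> h) \<longleftrightarrow> (\<exists>k\<in>\<Omega>0. h = g \<otimes>\<^bsub>H\<^esub> k)"
  proof (intro ballI)
    fix g h assume g: "g \<in> carrier H" and h: "h \<in> carrier H"
    obtain a b c d where gh: "g = (a, b)" "h = (c, d)" by fastforce
    have ab: "a \<in> S" "a \<noteq> \<zero>" "b \<in> S" "c \<in> S" "c \<noteq> \<zero>" "d \<in> S" using g h gh Hc by auto
    have cR: "a \<in> carrier R" "b \<in> carrier R" "c \<in> carrier R" "d \<in> carrier R" using ab inR by auto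
    have "line_adj (\<psi> g) (\<psi> h) \<longleftrightarrow>
        (\<gamma> b = \<gamma> d \<and> \<gamma> (a \<oplus> b) \<noteq> \<gamma> (c \<oplus> d)) \<or> (\<gamma> b = \<gamma> (c \<oplus> d) \<and> \<gamma> (a \<oplus> b) = \<gamma> d)"
      unfolding \<psi>_def gh using edge_adj_iff[OF neq[OF ab(1-3)] neq[OF ab(4-6)]] by simp
    also have "\<dots> \<longleftrightarrow> (b = d \<and> a \<oplus> b \<noteq> c \<oplus> d) \<or> (b = c \<oplus> d \<and> a \<oplus> b = d)"
    proof -
      have S2: "a \<oplus> b \<in> S" "c \<oplus> d \<in> S" using Sadd ab by auto
      have e: "\<gamma> x = \<gamma> y \<longleftrightarrow> x = y" if "x \<in> S" "y \<in> S" for x y using \<gamma>inj that by auto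
      show ?thesis using e[OF ab(3) ab(6)] e[OF S2] e[OF ab(3) S2(2)] e[OF S2(1) ab(6)] by simp
    qed
    also have "\<dots> \<longleftrightarrow> (\<exists>k\<in>\<Omega>0. h = g \<otimes>\<^bsub>H\<^esub> k)"
    proof
      assume "(b = d \<and> a \<oplus> b \<noteq> c \<oplus> d) \<or> (b = c \<oplus> d \<and> a \<oplus> b = d)"
      then show "\<exists>k\<in>\<Omega>0. h = g \<otimes>\<^bsub>H\<^esub> k"
      proof
        assume A: "b = d \<and> a \<oplus> b \<noteq> c \<oplus> d"
        define u where "u = inv a \<otimes> c"
        have uS: "u \<in> S" unfolding u_def using Sinv Smult ab by blast
        have au: "a \<otimes> u = c" unfolding u_def using invU[OF ab(1,2)] cR by (simp add: m_assoc[symmetric])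
        have "u \<noteq> \<zero>" using au ab cR by auto
        moreover have "u \<noteq> \<one>" using au A cR by auto
        ultimately have "(u, \<zero>) \<in> \<Omega>0" unfolding \<Omega>0_def using uS by auto
        moreover have "h = g \<otimes>\<^bsub>H\<^esub> (u, \<zero>)" using gh Hm au A cR by simp
        ultimately show ?thesis by blast
      next
        assume B: "b = c \<oplus> d \<and> a \<oplus> b = d"
        have B1: "b = c \<oplus> d" and B2: "a \<oplus> b = d" using B by auto
        have "c \<oplus> (a \<oplus> b) = b" by (simp only: B2) (rule B1[symmetric])
        then have "(c \<oplus> a) \<oplus> b = \<zero> \<oplus> b" using cR by (simp add: a_assoc)
        then have "c \<oplus> a = \<zero>" using cR by (metis add.m_closed add.right_cancel zero_closed)
        then have "\<ominus> a = c" using cR by (intro minus_equality) auto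
        then have "h = g \<otimes>\<^bsub>H\<^esub> (\<ominus> \<one>, \<one>)" using gh Hm B2 cR by (simp add: r_minus)
        then show ?thesis unfolding \<Omega>0_def by blast
      qed
    next
      assume "\<exists>k\<in>\<Omega>0. h = g \<otimes>\<^bsub>H\<^esub> k"
      then obtain k where k: "k \<in> \<Omega>0" "h = g \<otimes>\<^bsub>H\<^esub> k" by blast
      show "(b = d \<and> a \<oplus> b \<noteq> c \<oplus> d) \<or> (b = c \<oplus> d \<and> a \<oplus> b = d)"
      proof (cases "k = (\<ominus> \<one>, \<one>)")
        case True
        then have "c = \<ominus> a" "d = a \<oplus> b" using k gh Hm cR by (simp_all add: r_minus)
        then have "b = c \<oplus> d \<and> a \<oplus> b = d" using cR by (simp add: a_assoc[symmetric] l_neg)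
        then show ?thesis by blast
      next
        case False
        then obtain u where u: "k = (u, \<zero>)" "u \<in> S" "u \<noteq> \<zero>" "u \<noteq> \<one>" using k unfolding \<Omega>0_def by auto
        have uR: "u \<in> carrier R" using u inR by auto
        have cd: "c = a \<otimes> u" "d = b" using k u gh Hm cR by simp_all
        have "a \<otimes> u \<noteq> a"
        proof
          assume "a \<otimes> u = a"
          then have "a \<otimes> u = a \<otimes> \<one>" using cR by simp
          then have "u = \<one>" using m_lcancel[OF ab(2) cR(1) uR one_closed] by simp
          then show False using u by simp
        qed
        then have "a \<oplus> b \<noteq> c \<oplus> d" using cd cR uR by simp
        then show ?thesis using cd by blast
      qed
    qed
    finally show "line_adj (\<psi> g) (\<psi> h) \<longleftrightarrow> (\<exists>k\<in>\<Omega>0. h = g \<otimes>\<^bsub>H\<^esub> k)" .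
  qed
  show ?thesis
    using cayley_transport[OF grpH bijH Om1 Om2 Om3 adj] unfolding V_def .
qed


theorem theorem3p20:
  fixes n p m :: nat
  assumes "n \<ge> 4" and "prime p" and "m \<ge> 1" and "n = p ^ m"
  shows "is_cayley_graph (line_verts (B_verts n) B_adj) line_adj"
proof -
  obtain L :: "((int list \<times> nat) multiset \<Rightarrow> int) ring" and S where
    F: "field L" "S \<subseteq> carrier L" "\<zero>\<^bsub>L\<^esub> \<in> S" "\<one>\<^bsub>L\<^esub> \<in> S"
       "\<forall>x\<in>S. \<forall>y\<in>S. x \<oplus>\<^bsub>L\<^esub> y \<in> S \<and> x \<otimes>\<^bsub>L\<^esub> y \<in> S"
       "\<forall>x\<in>S. \<ominus>\<^bsub>L\<^esub> x \<in> S" "\<forall>x\<in>S - {\<zero>\<^bsub>L\<^esub>}. inv\<^bsub>L\<^esub> x \<in> S" "finite S" "card S = p ^ m"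
    using finite_field_exists[OF assms(2,3)] by blast
  interpret L: field L by (rule F(1))
  have "card S = card {1..n}" using F(9) assms(4) by simp
  then obtain \<gamma> where \<gamma>: "bij_betw \<gamma> S {1..n}"
    using finite_same_card_bij[OF F(8)] by blast
  have "is_cayley_graph {{{i}, {i, j}} | i j. i \<in> {1..n} \<and> j \<in> {1..n} \<and> i \<noteq> j} line_adj"
    by (rule L.agl_cayley[OF F(2,3,4) _ _ _ _ \<gamma>]) (use F(5,6,7) in auto)
  then show ?thesis by (simp add: line_verts_B)
qed

end
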